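(* Let $p>2$ be a prime and $n>2$ an integer, and let $G(p,n)=\langle x,y\mid x^{p^n}=1,\ y^{p^{n-1}}=1,\ yxy^{-1}=x^{p+1}\rangle\cong\mathbb{Z}_{p^n}\rtimes\mathbb{Z}_{p^{n-1}}$. Then $G(p,n)$ is a finite nilpotent group of nilpotency class at least $n-1$, and $[e]_\varphi$ is a subgroup of $G(p,n)$ for every inner automorphism $\varphi$ of $G(p,n)$. Consequently, if $p_n$ denotes the $n$-th prime, the direct product $G=\prod_{n>2}G(p_n,n)$ is a residually nilpotent, non-nilpotent group such that $[e]_\varphi$ is a subgroup of $G$ for every inner automorphism $\varphi$ of $G$.
   Context: For an automorphism $\varphi$ of a group $G$, $[e]_\varphi=\{z^{-1}\varphi(z)\mid z\in G\}$. A group $G$ is residually nilpotent if $\bigcap_k\gamma_k(G)=\{e\}$, where $\gamma_1(G)=G$, $\gamma_{k+1}(G)=[\gamma_k(G),G]$, $[x,y]=x^{-1}y^{-1}xy$. *)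

theory Defs
  imports "HOL-Algebra.Algebra" "HOL-Computational_Algebra.Primes" "HOL-Library.Infinite_Set"
begin

definition comm :: "('a, 'b) monoid_scheme \<Rightarrow> 'a \<Rightarrow> 'a \<Rightarrow> 'a" where
  "comm G x y = inv\<^bsub>G\<^esub> x \<otimes>\<^bsub>G\<^esub> inv\<^bsub>G\<^esub> y \<otimes>\<^bsub>G\<^esub> x \<otimes>\<^bsub>G\<^esub> y"

text \<open>Lower central series, 1-indexed: gamma G 1 = G, gamma G (k+1) = [gamma G k, G].
  (gamma G 0 is set to G as well; it plays no role.)\<close>
fun gamma :: "('a, 'b) monoid_scheme \<Rightarrow> nat \<Rightarrow> 'a set" where
  "gamma G 0 = carrier G"
| "gamma G (Suc 0) = carrier G"
| "gamma G (Suc (Suc k)) =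
     generate G {comm G x y | x y. x \<in> gamma G (Suc k) \<and> y \<in> carrier G}"

definition nilpotent_grp :: "('a, 'b) monoid_scheme \<Rightarrow> bool" where
  "nilpotent_grp G \<longleftrightarrow> (\<exists>c. gamma G (Suc c) = {\<one>\<^bsub>G\<^esub>})"

definition nilpotency_class :: "('a, 'b) monoid_scheme \<Rightarrow> nat" where
  "nilpotency_class G = (LEAST c. gamma G (Suc c) = {\<one>\<^bsub>G\<^esub>})"

definition residually_nilpotent :: "('a, 'b) monoid_scheme \<Rightarrow> bool" where
  "residually_nilpotent G \<longleftrightarrow> (\<Inter>k\<in>{1..}. gamma G k) = {\<one>\<^bsub>G\<^esub>}"

definition inner_aut :: "('a, 'b) monoid_scheme \<Rightarrow> 'a \<Rightarrow> 'a \<Rightarrow> 'a" where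
  "inner_aut G g = (\<lambda>z\<in>carrier G. g \<otimes>\<^bsub>G\<^esub> z \<otimes>\<^bsub>G\<^esub> inv\<^bsub>G\<^esub> g)"

definition inner_auts :: "('a, 'b) monoid_scheme \<Rightarrow> ('a \<Rightarrow> 'a) set" where
  "inner_auts G = inner_aut G ` carrier G"

definition twisted_class_e :: "('a, 'b) monoid_scheme \<Rightarrow> ('a \<Rightarrow> 'a) \<Rightarrow> 'a set" where
  "twisted_class_e G \<phi> = {inv\<^bsub>G\<^esub> z \<otimes>\<^bsub>G\<^esub> \<phi> z | z. z \<in> carrier G}"

text \<open>G(p,n) = Z_{p^n} \<rtimes> Z_{p^(n-1)}, where the generator y of Z_{p^(n-1)} acts on Z_{p^n}
  by multiplication by p+1.  The pair (a,b) stands for x^a y^b, so that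
  (x^a y^b)(x^c y^d) = x^(a + (p+1)^b c) y^(b+d).\<close>
definition Gpn :: "nat \<Rightarrow> nat \<Rightarrow> (nat \<times> nat) monoid" where
  "Gpn p n = \<lparr>carrier = {0..<p^n} \<times> {0..<p^(n-1)},
              monoid.mult = (\<lambda>(a,b) (c,d). ((a + (p+1)^b * c) mod p^n, (b + d) mod p^(n-1))),
              one = (0, 0)\<rparr>"

text \<open>n-th prime, 1-indexed: nth_prime 1 = 2, nth_prime 2 = 3, ...\<close>
definition nth_prime :: "nat \<Rightarrow> nat" where
  "nth_prime n = enumerate {p::nat. Factorial_Ring.prime p} (n - 1)"

end

theory Submission
  imports Defs "HOL-Number_Theory.Number_Theory"
begin


lemma expand3:
  fixes e :: int
  shows "\<exists>r. (1+e)^i = 1 + of_nat i * e + of_nat (i choose 2) * e^2 + e^3 * r"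
proof (induction i)
  case 0
  then show ?case by (rule exI[of _ 0]) simp
next
  case (Suc i)
  then obtain r where r: "(1+e)^i = 1 + of_nat i * e + of_nat (i choose 2) * e^2 + e^3 * r" by blast
  have c: "(Suc i choose 2) = (i choose 2) + i"
    by (simp add: numeral_2_eq_2)
  show ?case
    by (rule exI[of _ "of_nat (i choose 2) + r + r * e"])
       (simp add: r c algebra_simps power2_eq_square power3_eq_cube)
qed

lemma lte_step:
  fixes v :: int
  assumes p: "Factorial_Ring.prime p" "p > 2" and k: "k \<ge> 1"
  shows "\<exists>v'. (1 + int p^k * v)^p = 1 + int p^(k+1) * v' \<and> [v' = v] (mod int p)"
proof -
  obtain r where r: "(1 + int p^k * v)^p = 1 + of_nat p * (int p^k * v)
      + of_nat (p choose 2) * (int p^k * v)^2 + (int p^k * v)^3 * r"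
    using expand3 by blast
  have "p dvd (p choose 2)" using p by (intro dvd_choose_prime) auto
  then obtain c where c: "p choose 2 = p * c" by (auto simp: dvd_def)
  obtain k' where k': "k = Suc k'" using k by (cases k) auto
  define v' where "v' = v + int p ^ k * int c * v^2 + int p ^ (2*k'+1) * v^3 * r"
  have pk: "(int p) ^ (k' * 2) = int p ^ k' * int p ^ k'" by (simp add: power_mult power2_eq_square)
  have "(1 + int p^k * v)^p = 1 + of_nat p * (int p^k * v)
      + of_nat (p choose 2) * (int p^k * v)^2 + (int p^k * v)^3 * r" by (rule r)
  also have "\<dots> = 1 + int p^(k+1) * v'"
    unfolding v'_def c k'
    by (simp add: algebra_simps power2_eq_square power3_eq_cube power_add mult_2 pk)
  finally have "(1 + int p^k * v)^p = 1 + int p^(k+1) * v'" .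
  moreover have "[v' = v] (mod int p)"
  proof -
    have "int p dvd v' - v" unfolding v'_def k'
      by (simp add: algebra_simps)
    then show ?thesis by (simp add: cong_iff_dvd_diff cong_sym_eq)
  qed
  ultimately show ?thesis by blast
qed

lemma lte:
  assumes p: "Factorial_Ring.prime p" "p > 2"
  shows "\<exists>v. int (p+1)^(p^j) = 1 + int p^(j+1) * v \<and> [v = 1] (mod int p)"
proof (induction j)
  case 0
  then show ?case by (rule exI[of _ 1]) (simp add: cong_refl)
next
  case (Suc j)
  then obtain v where v: "int (p+1)^(p^j) = 1 + int p^(j+1) * v" "[v = 1] (mod int p)" by blast
  obtain v' where v': "(1 + int p^(j+1) * v)^p = 1 + int p^(j+1+1) * v'" "[v' = v] (mod int p)"
    using lte_step[OF p, of "j+1" v] by auto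
  have "int (p+1)^(p^Suc j) = (int (p+1)^(p^j))^p" by (simp add: power_mult[symmetric] mult.commute)
  also have "\<dots> = 1 + int p^(Suc j+1) * v'" using v(1) v'(1) by simp
  finally show ?case using v(2) v'(2) cong_trans by blast
qed

lemma q_pow_M:
  assumes p: "Factorial_Ring.prime p" "p > 2" and n: "n \<ge> 1"
  shows "[(p+1)^(p^(n-1)) = 1] (mod p^n)"
proof -
  obtain v where v: "int (p+1)^(p^(n-1)) = 1 + int p^(n-1+1) * v" using lte[OF p] by blast
  have "[int (p+1)^(p^(n-1)) = 1] (mod int p^n)"
    unfolding v using n by (simp add: cong_iff_dvd_diff)
  then show ?thesis using cong_int_iff by fastforce
qed

lemma q_not:
  assumes p: "Factorial_Ring.prime p" "p > 2" and n: "n \<ge> 2"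
  shows "\<not> [(p+1)^(p^(n-2)) = 1] (mod p^n)"
proof
  assume c: "[(p+1)^(p^(n-2)) = 1] (mod p^n)"
  obtain v where v: "int (p+1)^(p^(n-2)) = 1 + int p^(n-2+1) * v" "[v = 1] (mod int p)"
    using lte[OF p] by blast
  have "[int ((p+1)^(p^(n-2))) = int 1] (mod int (p^n))" using c by (simp only: cong_int_iff)
  then have "[int (p+1)^(p^(n-2)) = 1] (mod int p^n)" by simp
  then have "int p^n dvd int p^(n-2+1) * v" unfolding v by (simp add: cong_iff_dvd_diff)
  moreover have "int p^n = int p^(n-2+1) * int p" using n
  proof -
    have "n = (n-2) + 2" using n by simp
    then show ?thesis by (metis add_diff_cancel_right' one_add_one power_Suc2 add_Suc_right plus_1_eq_Suc)
  qed
  ultimately have "int p dvd v" using p by (simp add: prime_gt_0_nat)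
  then have "int p dvd 1" using v(2) cong_dvd_iff by blast
  then show False using p by simp
qed

lemma ord_q:
  assumes p: "Factorial_Ring.prime p" "p > 2" and n: "n \<ge> 2"
  shows "ord (p^n) (p+1) = p^(n-1)"
proof -
  have "ord (p^n) (p+1) dvd p^(n-1)" using q_pow_M[OF p] n ord_divides by fastforce
  then obtain i where i: "i \<le> n-1" "ord (p^n) (p+1) = p^i" using divides_primepow_nat[OF p(1)] by blast
  show ?thesis
  proof (cases "i = n-1")
    case False
    then have "p^i dvd p^(n-2)" using i by (intro le_imp_power_dvd) linarith
    then have "[(p+1)^(p^(n-2)) = 1] (mod p^n)" using i ord_divides by simp
    then show ?thesis using q_not[OF p n] by blast
  qed (use i in auto)
qed

lemma q_surj_nat:
  assumes p: "Factorial_Ring.prime p" "p > 2" and n: "n \<ge> 2"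
  shows "(\<lambda>b. (p+1)^b mod p^n) ` {..<p^(n-1)} = {x. x < p^n \<and> x mod p = 1}"
proof (rule card_subset_eq)
  have pn: "p^n = p * p^(n-1)"
  proof -
    have "n = Suc (n-1)" using n by simp
    then show ?thesis by (metis power_Suc)
  qed
  have p1: "p > 1" using p by linarith
  show fin: "finite {x. x < p^n \<and> x mod p = 1}" by simp
  show "(\<lambda>b. (p+1)^b mod p^n) ` {..<p^(n-1)} \<subseteq> {x. x < p^n \<and> x mod p = 1}"
  proof (rule image_subsetI)
    fix b
    have "(p+1)^b mod p^n mod p = (p+1)^b mod p" unfolding pn by (simp add: mod_mod_cancel)
    also have "\<dots> = 1"
    proof -
      have "(p+1) mod p = 1" using p1 by (simp add: mod_Suc)
      then have "(p+1)^b mod p = 1^b mod p" by (metis power_mod)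
      then show ?thesis using p1 by simp
    qed
    finally show "(p+1)^b mod p^n \<in> {x. x < p^n \<and> x mod p = 1}" using p1 by simp
  qed
  have "{x. x < p^n \<and> x mod p = 1} = (\<lambda>i. 1 + p*i) ` {..<p^(n-1)}"
  proof (rule equalityI; rule subsetI)
    fix x assume x: "x \<in> {x. x < p^n \<and> x mod p = 1}"
    then have "x = 1 + p * (x div p)" using div_mult_mod_eq[of x p] by (simp add: algebra_simps)
    moreover have "x div p < p^(n-1)" using x pn
      by (simp add: less_mult_imp_div_less mult.commute)
    ultimately show "x \<in> (\<lambda>i. 1 + p*i) ` {..<p^(n-1)}" by blast
  next
    fix x assume "x \<in> (\<lambda>i. 1 + p*i) ` {..<p^(n-1)}"
    then obtain i where i: "i < p^(n-1)" "x = 1 + p*i" by auto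
    have "x < p^n" using i pn p1
    proof -
      have "i + 1 \<le> p^(n-1)" using i by simp
      then have "p * (i+1) \<le> p * p^(n-1)" by (rule mult_le_mono2)
      then show ?thesis using i pn p1 by simp
    qed
    moreover have "x mod p = 1" using i p1 by (simp add: mod_Suc)
    ultimately show "x \<in> {x. x < p^n \<and> x mod p = 1}" by simp
  qed
  moreover have "inj_on (\<lambda>i. 1 + p*i) {..<p^(n-1)}" using p1 by (auto simp: inj_on_def)
  ultimately have c1: "card {x. x < p^n \<and> x mod p = 1} = p^(n-1)" by (simp add: card_image)
  have "inj_on (\<lambda>b. (p+1)^b mod p^n) {..<p^(n-1)}"
  proof (rule linorder_inj_onI', rule notI)
    fix b b' assume bb: "b \<in> {..<p^(n-1)}" "b' \<in> {..<p^(n-1)}" "b < b'"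
      and eq: "(p+1)^b mod p^n = (p+1)^b' mod p^n"
    have cop: "coprime ((p+1)^b) (p^n)" by (simp add: coprime_power_right_iff)
    have "[(p+1)^b * (p+1)^(b'-b) = (p+1)^b * 1] (mod p^n)"
      using eq bb by (simp add: cong_def power_add[symmetric])
    then have "[(p+1)^(b'-b) = 1] (mod p^n)" using cop cong_mult_lcancel_nat by blast
    then have "p^(n-1) dvd b'-b" using ord_q[OF p n] ord_divides by simp
    moreover have "0 < b'-b" "b'-b < p^(n-1)" using bb by auto
    ultimately show False by (simp add: nat_dvd_not_less)
  qed
  then show "card ((\<lambda>b. (p+1)^b mod p^n) ` {..<p^(n-1)}) = card {x. x < p^n \<and> x mod p = 1}"
    using c1 by (simp add: card_image)
qed

lemma q_surj:
  assumes p: "Factorial_Ring.prime p" "p > 2" and n: "n \<ge> 2"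
  shows "\<exists>b. [int (p+1)^b = 1 + int p * S] (mod int (p^n))"
proof -
  have p1: "p > 1" using p by linarith
  define x where "x = nat ((1 + int p * S) mod int (p^n))"
  have xi: "int x = (1 + int p * S) mod int (p^n)" unfolding x_def using p1 by simp
  have "x < p^n" using xi p1
  proof -
    have "int x < int (p^n)" unfolding xi using p1 by simp
    then show ?thesis by linarith
  qed
  moreover have "x mod p = 1"
  proof -
    have "int p dvd int (p^n)" using n by simp
    then have "int x mod int p = (1 + int p * S) mod int p" unfolding xi by (simp add: mod_mod_cancel)
    also have "\<dots> = 1" using p1 by simp
    finally have "int (x mod p) = int 1" by (simp add: of_nat_mod)
    then show ?thesis by (simp only: of_nat_eq_iff)
  qed
  ultimately have "x \<in> (\<lambda>b. (p+1)^b mod p^n) ` {..<p^(n-1)}" using q_surj_nat[OF p n] by simp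
  then obtain b where b: "(p+1)^b mod p^n = x" by blast
  have "int ((p+1)^b mod p^n) = int x" using b by simp
  then have "int ((p+1)^b) mod int (p^n) = (1 + int p * S) mod int (p^n)"
    using xi by (simp only: of_nat_mod)
  then show ?thesis by (auto simp: cong_def)
qed



lemma cong_aux: fixes x y k w m :: int
  assumes "x = y + k * (w - 1)" "[w = 1] (mod m)" shows "[x = y] (mod m)"
proof -
  have "m dvd w - 1" using assms(2) by (simp add: cong_iff_dvd_diff)
  then have "m dvd k * (w - 1)" by simp
  then show ?thesis using assms(1) by (simp add: cong_iff_dvd_diff)
qed


lemma twisted_inner:
  assumes G: "group G" and g: "g \<in> carrier G"
  shows "twisted_class_e G (inner_aut G g) = {comm G z (inv\<^bsub>G\<^esub> g) | z. z \<in> carrier G}"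
proof -
  have "inv\<^bsub>G\<^esub> z \<otimes>\<^bsub>G\<^esub> inner_aut G g z = comm G z (inv\<^bsub>G\<^esub> g)" if z: "z \<in> carrier G" for z
    using z g by (simp add: inner_aut_def comm_def group.inv_inv[OF G] monoid.m_assoc[OF group.is_monoid[OF G]]
        group.inv_closed[OF G] monoid.m_closed[OF group.is_monoid[OF G]])
  then show ?thesis unfolding twisted_class_e_def by (auto; metis)
qed

locale gpn =
  fixes p n :: nat
  assumes p: "Factorial_Ring.prime p" "p > 2" and n: "n > 2"
begin

abbreviation "G \<equiv> Gpn p n"
abbreviation "N \<equiv> p^n"
abbreviation "M \<equiv> p^(n-1)"
abbreviation "q \<equiv> int (p+1)"

definition elem :: "int \<Rightarrow> nat \<Rightarrow> nat \<times> nat" where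
  "elem A B = (nat (A mod int N), B mod M)"

lemma p1: "p > 1" using p by linarith
lemma Npos: "N > 1" using p1 n by (intro one_less_power) auto
lemma Mpos: "M > 1" using p1 n by (intro one_less_power) auto

lemma qM: "[q^M = 1] (mod int N)"
proof -
  have "[(p+1)^M = 1] (mod N)" using q_pow_M[OF p] n by simp
  then have "[int ((p+1)^M) = int 1] (mod int N)" by (simp only: cong_int_iff)
  then show ?thesis by simp
qed

lemma qmod: "[q^B = q^(B mod M)] (mod int N)"
proof -
  have e1: "M*(B div M) + B mod M = B" by simp
  have "q^(M*(B div M) + B mod M) = (q^M)^(B div M) * q^(B mod M)"
    by (simp only: power_add power_mult)
  then have "q^B = (q^M)^(B div M) * q^(B mod M)" by (simp only: e1)
  moreover have "[(q^M)^(B div M) * q^(B mod M) = 1^(B div M) * q^(B mod M)] (mod int N)"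
    by (intro cong_mult cong_pow qM cong_refl)
  ultimately show ?thesis by simp
qed

lemma qexp: assumes "[B1 = B2] (mod M)" shows "[q^B1 = q^B2] (mod int N)"
proof -
  have e: "B1 mod M = B2 mod M" using assms by (simp add: cong_def)
  have "[q^B1 = q^(B1 mod M)] (mod int N)" by (rule qmod)
  moreover have "[q^(B2 mod M) = q^B2] (mod int N)" by (rule cong_sym, rule qmod)
  ultimately show ?thesis unfolding e by (rule cong_trans)
qed

lemma carrier_G: "carrier G = {0..<N} \<times> {0..<M}" by (simp add: Gpn_def)
lemma mult_G: "x \<otimes>\<^bsub>G\<^esub> y = (case x of (a,b) \<Rightarrow> case y of (c,d) \<Rightarrow> ((a + (p+1)^b * c) mod N, (b + d) mod M))"
  by (simp add: Gpn_def split: prod.splits)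
lemma one_G: "\<one>\<^bsub>G\<^esub> = (0,0)" by (simp add: Gpn_def)

lemma elem_carrier: "elem A B \<in> carrier G"
proof -
  have "int N > 0" using Npos by linarith
  then have "A mod int N < int N" by simp
  moreover have "A mod int N \<ge> 0" using \<open>int N > 0\<close> by simp
  ultimately have "nat (A mod int N) < N" using nat_less_iff by blast
  moreover have "B mod M < M" using Mpos by (intro mod_less_divisor) linarith
  ultimately show ?thesis by (simp add: carrier_G elem_def)
qed

lemma elem_of: "x \<in> carrier G \<Longrightarrow> x = elem (int (fst x)) (snd x)"
  by (auto simp: carrier_G elem_def)

lemma elem_ex: "x \<in> carrier G \<Longrightarrow> \<exists>A B. x = elem A B"
  using elem_of by blast

lemma elem_eqI: "[A = C] (mod int N) \<Longrightarrow> [B = D] (mod M) \<Longrightarrow> elem A B = elem C D"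
  by (simp add: elem_def cong_def)

lemma one_elem: "\<one>\<^bsub>G\<^esub> = elem 0 0" by (simp add: one_G elem_def)

lemma mult_elem: "elem A B \<otimes>\<^bsub>G\<^esub> elem C D = elem (A + q^B * C) (B + D)"
proof -
  have NN: "int N > 0" using Npos by linarith
  have "int ((nat (A mod int N) + (p+1)^(B mod M) * nat (C mod int N)) mod N)
      = (A mod int N + q^(B mod M) * (C mod int N)) mod int N"
    using NN by (simp add: of_nat_mod)
  also have "\<dots> = (A + q^B * C) mod int N"
  proof -
    have c1: "[A mod int N = A] (mod int N)" by (simp add: cong_def)
    have c2: "[C mod int N = C] (mod int N)" by (simp add: cong_def)
    have c3: "[q^(B mod M) = q^B] (mod int N)" using qmod by (rule cong_sym)
    have "[A mod int N + q^(B mod M) * (C mod int N) = A + q^B * C] (mod int N)"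
      by (intro cong_add cong_mult c1 c2 c3)
    then show ?thesis by (simp add: cong_def)
  qed
  finally have h: "int ((nat (A mod int N) + (p+1)^(B mod M) * nat (C mod int N)) mod N) = (A + q^B * C) mod int N" .
  have "(nat (A mod int N) + (p+1)^(B mod M) * nat (C mod int N)) mod N = nat (int ((nat (A mod int N) + (p+1)^(B mod M) * nat (C mod int N)) mod N))"
    by (simp only: nat_int)
  also have "\<dots> = nat ((A + q^B * C) mod int N)" by (simp only: h)
  finally have "(nat (A mod int N) + (p+1)^(B mod M) * nat (C mod int N)) mod N = nat ((A + q^B * C) mod int N)" .
  moreover have "(B mod M + D mod M) mod M = (B + D) mod M" by (rule mod_add_eq)
  ultimately show ?thesis unfolding mult_G elem_def prod.case by (simp only:)
qed

lemma group_G: "group G"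
proof (rule groupI)
  show "x \<otimes>\<^bsub>G\<^esub> y \<in> carrier G" if xy: "x \<in> carrier G" "y \<in> carrier G" for x y
  proof -
    obtain A B where "x = elem A B" using xy(1) elem_ex by blast
    moreover obtain C D where "y = elem C D" using xy(2) elem_ex by blast
    ultimately show ?thesis by (simp add: mult_elem elem_carrier)
  qed
  show "\<one>\<^bsub>G\<^esub> \<in> carrier G" by (simp add: one_elem elem_carrier)
  show "x \<otimes>\<^bsub>G\<^esub> y \<otimes>\<^bsub>G\<^esub> z = x \<otimes>\<^bsub>G\<^esub> (y \<otimes>\<^bsub>G\<^esub> z)"
    if xyz: "x \<in> carrier G" "y \<in> carrier G" "z \<in> carrier G" for x y z
  proof -
    obtain A B where "x = elem A B" using xyz elem_ex by blast
    moreover obtain C D where "y = elem C D" using xyz elem_ex by blast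
    moreover obtain E F where "z = elem E F" using xyz elem_ex by blast
    ultimately show ?thesis by (simp add: mult_elem algebra_simps power_add)
  qed
  show "\<one>\<^bsub>G\<^esub> \<otimes>\<^bsub>G\<^esub> x = x" if xc: "x \<in> carrier G" for x
  proof -
    obtain A B where x: "x = elem A B" using xc elem_ex by blast
    show ?thesis unfolding x one_elem mult_elem by simp
  qed
  show "\<exists>y\<in>carrier G. y \<otimes>\<^bsub>G\<^esub> x = \<one>\<^bsub>G\<^esub>" if xc: "x \<in> carrier G" for x
  proof -
    obtain A B where x: "x = elem A B" using xc elem_ex by blast
    let ?y = "elem (-(q^((M-1)*B) * A)) ((M-1)*B)"
    have "?y \<otimes>\<^bsub>G\<^esub> x = elem 0 (M*B)" unfolding x mult_elem
    proof (rule elem_eqI)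
      show "[(M - 1) * B + B = M * B] (mod M)" using Mpos by (simp add: algebra_simps)
    qed simp
    also have "\<dots> = \<one>\<^bsub>G\<^esub>" by (simp add: one_elem elem_def)
    finally show ?thesis using elem_carrier by blast
  qed
qed

lemma linv_elem: "elem (-(q^((M-1)*B) * A)) ((M-1)*B) \<otimes>\<^bsub>G\<^esub> elem A B = \<one>\<^bsub>G\<^esub>"
proof -
  have "elem (-(q^((M-1)*B) * A)) ((M-1)*B) \<otimes>\<^bsub>G\<^esub> elem A B = elem 0 (M*B)" unfolding mult_elem
  proof (rule elem_eqI)
    show "[(M - 1) * B + B = M * B] (mod M)" using Mpos by (simp add: algebra_simps)
  qed simp
  also have "\<dots> = \<one>\<^bsub>G\<^esub>" by (simp add: one_elem elem_def)
  finally show ?thesis .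
qed

lemma inv_elem: "inv\<^bsub>G\<^esub> (elem A B) = elem (-(q^((M-1)*B) * A)) ((M-1)*B)"
  using group.inv_equality[OF group_G linv_elem elem_carrier elem_carrier] .

lemma M1: "(M - 1) * x + x = M * x"
  using Mpos by (simp add: algebra_simps)

lemma M2: "[(M - 1) * B + (M - 1) * D + B + D = 0] (mod M)"
proof -
  have "(M - 1) * B + (M - 1) * D + B + D = M * (B + D)"
    using M1[of B] M1[of D] add_mult_distrib2[of M B D] by linarith
  then show ?thesis by (simp add: cong_def)
qed

lemma qinv: "[q^((M-1)*D) * q^D = 1] (mod int N)"
proof -
  have "[(M-1)*D + D = 0] (mod M)" using Mpos by (simp add: algebra_simps cong_def)
  then have "[q^((M-1)*D + D) = q^0] (mod int N)" by (rule qexp)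
  then show ?thesis by (simp add: power_add)
qed

lemma comm_elem: "comm G (elem A B) (elem C D) = elem (q^((M-1)*B) * q^((M-1)*D) * ((q^B - 1)*C - (q^D - 1)*A)) 0"
  unfolding comm_def inv_elem mult_elem
  apply (rule elem_eqI)
   apply (rule cong_aux[where k = "q^((M-1)*B) * A" and w = "q^((M-1)*D) * q^D"])
    apply (simp add: algebra_simps power_add)
   apply (rule qinv)
  apply (rule M2)
  done

definition H :: "nat \<Rightarrow> (nat \<times> nat) set" where
  "H j = {elem (int p^j * xx) 0 | xx. True}"

lemma subgroup_H: "subgroup (H j) G"
proof (rule group.subgroupI[OF group_G])
  show "H j \<subseteq> carrier G" unfolding H_def using elem_carrier by blast
  show "H j \<noteq> {}" unfolding H_def by blast
  show "inv\<^bsub>G\<^esub> a \<in> H j" if aH: "a \<in> H j" for a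
  proof -
    obtain xx where a: "a = elem (int p^j * xx) 0" using aH unfolding H_def by blast
    have "inv\<^bsub>G\<^esub> a = elem (int p^j * (-xx)) 0" unfolding a inv_elem by simp
    then show ?thesis unfolding H_def by blast
  qed
  show "a \<otimes>\<^bsub>G\<^esub> b \<in> H j" if abH: "a \<in> H j" "b \<in> H j" for a b
  proof -
    obtain xx where a: "a = elem (int p^j * xx) 0" using abH(1) unfolding H_def by blast
    obtain yy where b: "b = elem (int p^j * yy) 0" using abH(2) unfolding H_def by blast
    have "a \<otimes>\<^bsub>G\<^esub> b = elem (int p^j * (xx + yy)) 0" unfolding a b mult_elem
      by (simp add: algebra_simps)
    then show ?thesis unfolding H_def by blast
  qed
qed

lemma qdvd: "int p dvd q^B - 1"
proof -
  have "[q = 1] (mod int p)" by (simp add: cong_def)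
  then have "[q^B = 1^B] (mod int p)" by (rule cong_pow)
  then show ?thesis by (simp add: cong_iff_dvd_diff)
qed

lemma comm_H1: assumes "x \<in> carrier G" "y \<in> carrier G" shows "comm G x y \<in> H 1"
proof -
  obtain A B where x: "x = elem A B" using assms(1) elem_ex by blast
  obtain C D where y: "y = elem C D" using assms(2) elem_ex by blast
  obtain t1 where t1: "q^B - 1 = int p * t1" using qdvd by (meson dvdE)
  obtain t2 where t2: "q^D - 1 = int p * t2" using qdvd by (meson dvdE)
  have "comm G x y = elem (int p^1 * (q^((M-1)*B) * q^((M-1)*D) * (t1*C - t2*A))) 0"
    unfolding x y comm_elem t1 t2 by (simp add: algebra_simps)
  then show ?thesis unfolding H_def by blast
qed

lemma comm_Hk: assumes "x \<in> H (Suc k)" "y \<in> carrier G" shows "comm G x y \<in> H (Suc (Suc k))"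
proof -
  obtain xx where x: "x = elem (int p^(Suc k) * xx) 0" using assms(1) unfolding H_def by blast
  obtain C D where y: "y = elem C D" using assms(2) elem_ex by blast
  obtain t2 where t2: "q^D - 1 = int p * t2" using qdvd by (meson dvdE)
  have "comm G x y = elem (int p^(Suc (Suc k)) * (- (q^((M-1)*D) * t2 * xx))) 0"
    unfolding x y comm_elem t2 by (simp add: algebra_simps)
  then show ?thesis unfolding H_def by blast
qed

lemma gamma_sub: "gamma G (Suc (Suc k)) \<subseteq> H (Suc k)"
proof (induction k)
  case 0
  have "gamma G (Suc (Suc 0)) = generate G {comm G x y | x y. x \<in> carrier G \<and> y \<in> carrier G}" by simp
  also have "\<dots> \<subseteq> H 1"
    using comm_H1 by (intro group.generate_subgroup_incl[OF group_G] subgroup_H) blast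
  finally show ?case by simp
next
  case (Suc k)
  have "gamma G (Suc (Suc (Suc k))) = generate G {comm G x y | x y. x \<in> gamma G (Suc (Suc k)) \<and> y \<in> carrier G}" by simp
  also have "\<dots> \<subseteq> H (Suc (Suc k))"
    using comm_Hk Suc.IH by (intro group.generate_subgroup_incl[OF group_G] subgroup_H) blast
  finally show ?case .
qed

lemma one_gamma: "\<one>\<^bsub>G\<^esub> \<in> gamma G k"
proof (cases k)
  case 0 then show ?thesis using group.subgroupE(2)[OF group_G subgroup_H[of 0]] subgroup_H
    by (simp add: group.is_monoid[OF group_G] monoid.one_closed)
next
  case (Suc k') then show ?thesis
    by (cases k') (auto intro: generate.one simp: monoid.one_closed group.is_monoid[OF group_G])
qed

lemma gamma_top: "gamma G (Suc n) = {\<one>\<^bsub>G\<^esub>}"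
proof -
  have sn: "Suc n = Suc (Suc (n-1))" using n by simp
  have "gamma G (Suc n) \<subseteq> H n" using gamma_sub[of "n-1"] n unfolding sn by simp
  also have "H n \<subseteq> {\<one>\<^bsub>G\<^esub>}"
  proof
    fix x assume "x \<in> H n"
    then obtain xx where x: "x = elem (int p^n * xx) 0" unfolding H_def by blast
    have "elem (int p^n * xx) 0 = elem 0 0" by (rule elem_eqI) (auto simp: cong_def)
    then show "x \<in> {\<one>\<^bsub>G\<^esub>}" using x one_elem by simp
  qed
  finally show ?thesis using one_gamma by blast
qed

lemma MM1: "[(M-1)*(M-1) = 1] (mod M)"
proof -
  define m where "m = M - 1"
  have m: "M = Suc m" "m \<ge> 1" using Mpos unfolding m_def by auto
  have e: "m * m = 1 + Suc m * (m - 1)" using m(2) by (cases m) (auto simp: algebra_simps)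
  have "(m * m) mod Suc m = 1 mod Suc m" unfolding e by (simp only: mod_mult_self2)
  then have "(m * m) mod Suc m = 1" using m(2) by simp
  then show ?thesis unfolding cong_def m(1) using m(2) by simp
qed

lemma lower: "elem (int p^k) 0 \<in> gamma G (Suc k)"
proof (induction k)
  case 0
  then show ?case using elem_carrier by simp
next
  case (Suc k)
  have c1: "[q^((M-1)*(M-1)) = q^1] (mod int N)" using MM1 by (rule qexp)
  have Msuc: "M = Suc (M-1)" using Mpos by simp
  have c2: "q^M = q * q^(M-1)" by (subst Msuc) simp
  have "comm G (elem (int p^k) 0) (elem 0 (M-1)) = elem (q^((M-1)*(M-1)) * ((1 - q^(M-1)) * int p^k)) 0"
    unfolding comm_elem by (simp add: algebra_simps)
  also have "\<dots> = elem (int p^(Suc k)) 0"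
  proof (rule elem_eqI)
    have cA: "[q^((M-1)*(M-1)) * ((1 - q^(M-1)) * int p^k) = q * ((1 - q^(M-1)) * int p^k)] (mod int N)"
      using c1 by (intro cong_mult cong_refl) simp
    have cB: "q * ((1 - q^(M-1)) * int p^k) = (q - q^M) * int p^k" unfolding c2 by (simp add: algebra_simps)
    have cC: "[(q - q^M) * int p^k = (q - 1) * int p^k] (mod int N)"
      by (intro cong_mult cong_diff cong_refl qM)
    have cD: "(q - 1) * int p^k = int p^(Suc k)" by simp
    from cA have "[q^((M-1)*(M-1)) * ((1 - q^(M-1)) * int p^k) = (q - q^M) * int p^k] (mod int N)"
      unfolding cB .
    from cong_trans[OF this cC] show "[q^((M-1)*(M-1)) * ((1 - q^(M-1)) * int p^k) = int p^(Suc k)] (mod int N)"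
      unfolding cD .
  qed simp
  finally have e: "comm G (elem (int p^k) 0) (elem 0 (M-1)) = elem (int p^(Suc k)) 0" .
  have "comm G (elem (int p^k) 0) (elem 0 (M-1)) \<in> {comm G x y | x y. x \<in> gamma G (Suc k) \<and> y \<in> carrier G}"
    using Suc.IH elem_carrier by blast
  then have "comm G (elem (int p^k) 0) (elem 0 (M-1)) \<in> gamma G (Suc (Suc k))"
    by (simp add: generate.incl)
  then show ?case unfolding e .
qed

lemma lower_ne: "k < n \<Longrightarrow> elem (int p^k) 0 \<noteq> \<one>\<^bsub>G\<^esub>"
proof
  assume k: "k < n" and e: "elem (int p^k) 0 = \<one>\<^bsub>G\<^esub>"
  have "p^k < p^n" using k p1 by (intro power_strict_increasing) auto
  then have "int p^k mod int N = int p^k" using p1 by (simp add: of_nat_less_iff[symmetric])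
  moreover have "nat (int p ^ k) = p^k" by (simp add: nat_power_eq)
  ultimately have "fst (elem (int p^k) 0) = p^k" by (simp add: elem_def)
  then show False using e p1 by (simp add: one_G)
qed

definition R :: "int \<Rightarrow> nat \<Rightarrow> (nat \<times> nat) set" where
  "R C D = {elem (q^((M-1)*D) * (int p * C * s + (q^D - 1) * y)) 0 | s y. True}"

lemma subgroup_R: "subgroup (R C D) G"
proof (rule group.subgroupI[OF group_G])
  show "R C D \<subseteq> carrier G" unfolding R_def using elem_carrier by blast
  show "R C D \<noteq> {}" unfolding R_def by blast
  show "inv\<^bsub>G\<^esub> a \<in> R C D" if aH: "a \<in> R C D" for a
  proof -
    obtain s y where a: "a = elem (q^((M-1)*D) * (int p * C * s + (q^D - 1) * y)) 0" using aH unfolding R_def by blast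
    have "inv\<^bsub>G\<^esub> a = elem (q^((M-1)*D) * (int p * C * (-s) + (q^D - 1) * (-y))) 0"
      unfolding a inv_elem by (simp add: algebra_simps)
    then show ?thesis unfolding R_def by blast
  qed
  show "a \<otimes>\<^bsub>G\<^esub> b \<in> R C D" if abH: "a \<in> R C D" "b \<in> R C D" for a b
  proof -
    obtain s y where a: "a = elem (q^((M-1)*D) * (int p * C * s + (q^D - 1) * y)) 0" using abH(1) unfolding R_def by blast
    obtain s' y' where b: "b = elem (q^((M-1)*D) * (int p * C * s' + (q^D - 1) * y')) 0" using abH(2) unfolding R_def by blast
    have "a \<otimes>\<^bsub>G\<^esub> b = elem (q^((M-1)*D) * (int p * C * (s + s') + (q^D - 1) * (y + y'))) 0"
      unfolding a b mult_elem by (simp add: algebra_simps)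
    then show ?thesis unfolding R_def by blast
  qed
qed

lemma comm_set_R: "{comm G z (elem C D) | z. z \<in> carrier G} = R C D"
proof (rule equalityI; rule subsetI)
  fix x assume "x \<in> {comm G z (elem C D) | z. z \<in> carrier G}"
  then obtain z where z: "z \<in> carrier G" "x = comm G z (elem C D)" by blast
  obtain A B where zAB: "z = elem A B" using z(1) elem_ex by blast
  obtain t where t: "q^B - 1 = int p * t" using qdvd by (meson dvdE)
  have "x = elem (q^((M-1)*D) * (int p * C * (q^((M-1)*B) * t) + (q^D - 1) * (- (q^((M-1)*B) * A)))) 0"
    unfolding z(2) zAB comm_elem t by (simp add: algebra_simps)
  then show "x \<in> R C D" unfolding R_def by blast
next
  fix x assume "x \<in> R C D"
  then obtain s y where x: "x = elem (q^((M-1)*D) * (int p * C * s + (q^D - 1) * y)) 0"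
    unfolding R_def by blast
  obtain B' where B': "[q^B' = 1 + int p * (-s)] (mod int N)"
    using q_surj[OF p, of n "-s"] n by auto
  define B where "B = (M-1)*B'"
  define A where "A = -(q^B * y)"
  define u where "u = q^((M-1)*B)"
  have hu1: "[u * q^B = 1] (mod int N)" unfolding u_def by (rule qinv)
  have "[(M-1)*B = B'] (mod M)"
  proof -
    have "[(M-1)*(M-1)*B' = 1*B'] (mod M)" by (intro cong_mult MM1 cong_refl)
    then show ?thesis unfolding B_def by (simp add: mult.assoc)
  qed
  then have "[u = q^B'] (mod int N)" unfolding u_def by (rule qexp)
  from cong_trans[OF this B'] have hu2: "[u = 1 - int p * s] (mod int N)" by simp
  have e1: "q^((M-1)*B) * q^((M-1)*D) * ((q^B - 1)*C - (q^D - 1)*A)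
      = q^((M-1)*D) * ((u * q^B - u) * C + (q^D - 1) * (u * q^B) * y)"
    unfolding u_def A_def by (simp add: algebra_simps)
  have c: "[q^((M-1)*D) * ((u * q^B - u) * C + (q^D - 1) * (u * q^B) * y)
      = q^((M-1)*D) * ((1 - (1 - int p * s)) * C + (q^D - 1) * 1 * y)] (mod int N)"
    by (intro cong_mult cong_add cong_diff cong_refl hu1 hu2)
  have e2: "q^((M-1)*D) * ((1 - (1 - int p * s)) * C + (q^D - 1) * 1 * y)
      = q^((M-1)*D) * (int p * C * s + (q^D - 1) * y)" by (simp add: algebra_simps)
  have "[q^((M-1)*B) * q^((M-1)*D) * ((q^B - 1)*C - (q^D - 1)*A)
      = q^((M-1)*D) * (int p * C * s + (q^D - 1) * y)] (mod int N)" using c unfolding e1 e2 .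
  then have "comm G (elem A B) (elem C D) = x" unfolding comm_elem x
    by (rule elem_eqI) simp
  then show "x \<in> {comm G z (elem C D) | z. z \<in> carrier G}" using elem_carrier by blast
qed

lemma comm_set_subgroup: assumes "w \<in> carrier G" shows "subgroup {comm G z w | z. z \<in> carrier G} G"
proof -
  obtain C D where w: "w = elem C D" using assms elem_ex by blast
  show ?thesis unfolding w comm_set_R by (rule subgroup_R)
qed

lemma lower_comm: "elem (int p^(Suc k)) 0 = comm G (elem (int p^k) 0) (elem 0 (M-1))"
proof -
  have c1: "[q^((M-1)*(M-1)) = q^1] (mod int N)" using MM1 by (rule qexp)
  have Msuc: "M = Suc (M-1)" using Mpos by simp
  have c2: "q^M = q * q^(M-1)" by (subst Msuc) simp
  have "comm G (elem (int p^k) 0) (elem 0 (M-1)) = elem (q^((M-1)*(M-1)) * ((1 - q^(M-1)) * int p^k)) 0"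
    unfolding comm_elem by (simp add: algebra_simps)
  also have "\<dots> = elem (int p^(Suc k)) 0"
  proof (rule elem_eqI)
    have cA: "[q^((M-1)*(M-1)) * ((1 - q^(M-1)) * int p^k) = q * ((1 - q^(M-1)) * int p^k)] (mod int N)"
      using c1 by (intro cong_mult cong_refl) simp
    have cB: "q * ((1 - q^(M-1)) * int p^k) = (q - q^M) * int p^k" unfolding c2 by (simp add: algebra_simps)
    have cC: "[(q - q^M) * int p^k = (q - 1) * int p^k] (mod int N)"
      by (intro cong_mult cong_diff cong_refl qM)
    have cD: "(q - 1) * int p^k = int p^(Suc k)" by simp
    from cA have "[q^((M-1)*(M-1)) * ((1 - q^(M-1)) * int p^k) = (q - q^M) * int p^k] (mod int N)"
      unfolding cB .
    from cong_trans[OF this cC] show "[q^((M-1)*(M-1)) * ((1 - q^(M-1)) * int p^k) = int p^(Suc k)] (mod int N)"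
      unfolding cD .
  qed simp
  finally show ?thesis by simp
qed

lemma twisted_inner_G: "g \<in> carrier G \<Longrightarrow> twisted_class_e G (inner_aut G g) = {comm G z (inv\<^bsub>G\<^esub> g) | z. z \<in> carrier G}"
  using twisted_inner[OF group_G] .

lemma factor_main:
  "group G \<and> finite (carrier G) \<and> nilpotent_grp G \<and> nilpotency_class G \<ge> n - 1 \<and>
   (\<forall>\<phi>\<in>inner_auts G. subgroup (twisted_class_e G \<phi>) G)"
proof (intro conjI ballI)
  show "group G" by (rule group_G)
  show "finite (carrier G)" by (simp add: carrier_G)
  show "nilpotent_grp G" unfolding nilpotent_grp_def using gamma_top by blast
  show "nilpotency_class G \<ge> n - 1"
  proof (rule ccontr)
    assume "\<not> nilpotency_class G \<ge> n - 1"
    then have c: "nilpotency_class G < n - 1" by simp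
    have "gamma G (Suc (nilpotency_class G)) = {\<one>\<^bsub>G\<^esub>}"
      unfolding nilpotency_class_def by (rule LeastI[of _ n]) (rule gamma_top)
    then have "elem (int p^(nilpotency_class G)) 0 = \<one>\<^bsub>G\<^esub>" using lower by blast
    then show False using lower_ne c by simp
  qed
  fix \<phi> assume "\<phi> \<in> inner_auts G"
  then obtain g where g: "g \<in> carrier G" "\<phi> = inner_aut G g" unfolding inner_auts_def by blast
  have "inv\<^bsub>G\<^esub> g \<in> carrier G" using g(1) by (simp add: group.inv_closed[OF group_G])
  then show "subgroup (twisted_class_e G \<phi>) G" unfolding g(2) twisted_inner_G[OF g(1)]
    by (rule comm_set_subgroup)
qed

end


lemma comm_closed: "group G \<Longrightarrow> x \<in> carrier G \<Longrightarrow> y \<in> carrier G \<Longrightarrow> comm G x y \<in> carrier G"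
proof -
  assume G: "group G" and xy: "x \<in> carrier G" "y \<in> carrier G"
  interpret group G using G .
  show ?thesis using xy by (simp add: comm_def)
qed

lemma gamma_subgroup_Suc: assumes G: "group G" shows "subgroup (gamma G (Suc k)) G"
proof (induction k)
  case 0
  then show ?case using group.subgroup_self[OF G] by simp
next
  case (Suc k)
  have sub: "gamma G (Suc k) \<subseteq> carrier G" using subgroup.subset[OF Suc.IH] .
  have "{comm G x y | x y. x \<in> gamma G (Suc k) \<and> y \<in> carrier G} \<subseteq> carrier G"
    using sub comm_closed[OF G] by auto
  then have "subgroup (generate G {comm G x y | x y. x \<in> gamma G (Suc k) \<and> y \<in> carrier G}) G"
    by (rule group.generate_is_subgroup[OF G])
  then show ?case by simp
qed

lemma gamma_subgroup: assumes G: "group G" shows "subgroup (gamma G k) G"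
proof (cases k)
  case 0 then show ?thesis using group.subgroup_self[OF G] by simp
next
  case (Suc k') then show ?thesis using gamma_subgroup_Suc[OF G, of k'] by simp
qed

lemma comm_product:
  assumes F: "\<And>i. i \<in> I \<Longrightarrow> group (F i)"
    and x: "x \<in> carrier (product_group I F)" and y: "y \<in> carrier (product_group I F)"
  shows "comm (product_group I F) x y = (\<lambda>i\<in>I. comm (F i) (x i) (y i))"
proof -
  have gr: "group (product_group I F)" using F by simp
  have "inv\<^bsub>product_group I F\<^esub> x = (\<lambda>i\<in>I. inv\<^bsub>F i\<^esub> x i)" by (rule inv_product_group[of x I F, OF _ F]) (use x in simp)
  moreover have "inv\<^bsub>product_group I F\<^esub> y = (\<lambda>i\<in>I. inv\<^bsub>F i\<^esub> y i)" by (rule inv_product_group[of y I F, OF _ F]) (use y in simp)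
  ultimately show ?thesis by (simp add: comm_def fun_eq_iff)
qed

lemma gamma_product:
  assumes F: "\<And>i. i \<in> I \<Longrightarrow> group (F i)"
  shows "gamma (product_group I F) (Suc k) \<subseteq> PiE I (\<lambda>i. gamma (F i) (Suc k))"
proof (induction k)
  case 0
  then show ?case by simp
next
  case (Suc k)
  have gr: "group (product_group I F)" using F by simp
  have sg: "subgroup (PiE I (\<lambda>i. gamma (F i) (Suc (Suc k)))) (product_group I F)"
    using PiE_subgroup_product_group[of I F] F gamma_subgroup by blast
  have "{comm (product_group I F) x y | x y. x \<in> gamma (product_group I F) (Suc k) \<and> y \<in> carrier (product_group I F)}
        \<subseteq> PiE I (\<lambda>i. gamma (F i) (Suc (Suc k)))"
  proof clarify
    fix x y assume x: "x \<in> gamma (product_group I F) (Suc k)" and y: "y \<in> carrier (product_group I F)"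
    have xc: "x \<in> carrier (product_group I F)" using x subgroup.subset gamma_subgroup[OF gr] by blast
    have xi: "x i \<in> gamma (F i) (Suc k)" if "i \<in> I" for i using x Suc.IH that by blast
    have yi: "y i \<in> carrier (F i)" if "i \<in> I" for i using y that by auto
    have "comm (F i) (x i) (y i) \<in> gamma (F i) (Suc (Suc k))" if "i \<in> I" for i
      using xi[OF that] yi[OF that] by (auto intro: generate.incl)
    then have h: "\<forall>i\<in>I. comm (F i) (x i) (y i) \<in> gamma (F i) (Suc (Suc k))" by blast
    have e: "comm (product_group I F) x y = (\<lambda>i\<in>I. comm (F i) (x i) (y i))"
      by (rule comm_product[of I F, OF F xc y])
    show "comm (product_group I F) x y \<in> PiE I (\<lambda>i. gamma (F i) (Suc (Suc k)))"
      using h by (simp add: e)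
  qed
  then show ?case using group.generate_subgroup_incl[OF gr _ sg] by simp
qed

definition single :: "'i set \<Rightarrow> ('i \<Rightarrow> ('a, 'b) monoid_scheme) \<Rightarrow> 'i \<Rightarrow> 'a \<Rightarrow> 'i \<Rightarrow> 'a" where
  "single I F i u = (\<lambda>j\<in>I. if j = i then u else \<one>\<^bsub>F j\<^esub>)"

lemma single_carrier:
  assumes F: "\<And>i. i \<in> I \<Longrightarrow> group (F i)" and "u \<in> carrier (F i)"
  shows "single I F i u \<in> carrier (product_group I F)"
proof -
  have "\<one>\<^bsub>F j\<^esub> \<in> carrier (F j)" if "j \<in> I" for j
    using monoid.one_closed[OF group.is_monoid[OF F[OF that]]] .
  then show ?thesis using assms(2) by (auto simp: single_def)
qed

lemma single_comm:
  assumes F: "\<And>i. i \<in> I \<Longrightarrow> group (F i)" and a: "a \<in> carrier (F i)" and b: "b \<in> carrier (F i)"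
  shows "comm (product_group I F) (single I F i a) (single I F i b) = single I F i (comm (F i) a b)"
proof -
  have h: "comm (F j) \<one>\<^bsub>F j\<^esub> \<one>\<^bsub>F j\<^esub> = \<one>\<^bsub>F j\<^esub>" if "j \<in> I" for j
  proof -
    interpret gj: group "F j" using F[OF that] .
    show ?thesis by (simp add: comm_def)
  qed
  have e: "comm (product_group I F) (single I F i a) (single I F i b)
      = (\<lambda>j\<in>I. comm (F j) (single I F i a j) (single I F i b j))"
    by (rule comm_product[of I F, OF F single_carrier[of I F, OF F a] single_carrier[of I F, OF F b]])
  show ?thesis unfolding e
  proof (rule ext)
    fix j show "(\<lambda>j\<in>I. comm (F j) (single I F i a j) (single I F i b j)) j = single I F i (comm (F i) a b) j"
      using h by (cases "j \<in> I"; cases "j = i") (auto simp: single_def)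
  qed
qed

lemma single_gamma:
  assumes F: "\<And>i. i \<in> I \<Longrightarrow> group (F i)" and i: "i \<in> I"
    and a: "\<And>k. a k \<in> carrier (F i)" and b: "b \<in> carrier (F i)"
    and rec: "\<And>k. a (Suc k) = comm (F i) (a k) b"
  shows "single I F i (a k) \<in> gamma (product_group I F) (Suc k)"
proof (induction k)
  case 0
  then show ?case using single_carrier[of I F, OF F a] by simp
next
  case (Suc k)
  have e: "single I F i (a (Suc k)) = comm (product_group I F) (single I F i (a k)) (single I F i b)"
    by (simp only: rec single_comm[of I F, OF F a b])
  have sb: "single I F i b \<in> carrier (product_group I F)" using single_carrier[of I F, OF F b] .
  have "comm (product_group I F) (single I F i (a k)) (single I F i b) \<in>
     {comm (product_group I F) x y | x y. x \<in> gamma (product_group I F) (Suc k) \<and> y \<in> carrier (product_group I F)}"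
    using Suc.IH sb by blast
  then have "comm (product_group I F) (single I F i (a k)) (single I F i b) \<in>
     generate (product_group I F) {comm (product_group I F) x y | x y. x \<in> gamma (product_group I F) (Suc k) \<and> y \<in> carrier (product_group I F)}"
    by (rule generate.incl)
  then show ?case by (simp add: e)
qed

lemma product_twisted:
  assumes F: "\<And>i. i \<in> I \<Longrightarrow> group (F i)" and w: "w \<in> carrier (product_group I F)"
  shows "{comm (product_group I F) z w | z. z \<in> carrier (product_group I F)}
       = PiE I (\<lambda>i. {comm (F i) z (w i) | z. z \<in> carrier (F i)})"
proof (rule equalityI; rule subsetI)
  fix x assume "x \<in> {comm (product_group I F) z w | z. z \<in> carrier (product_group I F)}"
  then obtain z where z: "z \<in> carrier (product_group I F)" "x = comm (product_group I F) z w" by blast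
  have e: "comm (product_group I F) z w = (\<lambda>i\<in>I. comm (F i) (z i) (w i))"
    by (rule comm_product[of I F, OF F z(1) w])
  have "\<forall>i\<in>I. comm (F i) (z i) (w i) \<in> {comm (F i) z (w i) | z. z \<in> carrier (F i)}"
  proof
    fix i assume i: "i \<in> I"
    have "z i \<in> carrier (F i)" using PiE_mem[OF _ i, of z "\<lambda>i. carrier (F i)"] z(1) by simp
    then show "comm (F i) (z i) (w i) \<in> {comm (F i) z (w i) | z. z \<in> carrier (F i)}" by blast
  qed
  then show "x \<in> PiE I (\<lambda>i. {comm (F i) z (w i) | z. z \<in> carrier (F i)})"
    by (simp add: e z(2))
next
  fix x assume x: "x \<in> PiE I (\<lambda>i. {comm (F i) z (w i) | z. z \<in> carrier (F i)})"
  define z where "z = (\<lambda>i\<in>I. SOME z. z \<in> carrier (F i) \<and> x i = comm (F i) z (w i))"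
  have zi: "z i \<in> carrier (F i) \<and> x i = comm (F i) (z i) (w i)" if "i \<in> I" for i
  proof -
    have "x i \<in> {comm (F i) z (w i) | z. z \<in> carrier (F i)}" using PiE_mem[OF x that] .
    then have "\<exists>z. z \<in> carrier (F i) \<and> x i = comm (F i) z (w i)" by blast
    then have "(SOME z. z \<in> carrier (F i) \<and> x i = comm (F i) z (w i)) \<in> carrier (F i) \<and>
      x i = comm (F i) (SOME z. z \<in> carrier (F i) \<and> x i = comm (F i) z (w i)) (w i)" (is ?A) by (rule someI_ex)
    have B: "z i = (SOME z. z \<in> carrier (F i) \<and> x i = comm (F i) z (w i))" unfolding z_def using that by simp
    from \<open>?A\<close> show ?thesis unfolding B[symmetric] .
  qed
  have "z \<in> PiE I (\<lambda>i. carrier (F i))"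
  proof (rule PiE_I)
    show "z i \<in> carrier (F i)" if "i \<in> I" for i using zi[OF that] by (rule conjunct1)
    show "z i = undefined" if "i \<notin> I" for i using that unfolding z_def by simp
  qed
  then have zc: "z \<in> carrier (product_group I F)" by simp
  have e: "comm (product_group I F) z w = (\<lambda>i\<in>I. comm (F i) (z i) (w i))"
    by (rule comm_product[of I F, OF F zc w])
  have "(\<lambda>i\<in>I. comm (F i) (z i) (w i)) = x"
  proof (rule ext)
    fix i show "(\<lambda>i\<in>I. comm (F i) (z i) (w i)) i = x i"
    proof (cases "i \<in> I")
      case True
      then have "x i = comm (F i) (z i) (w i)" using zi by blast
      then show ?thesis using True by simp
    next
      case False
      have "x i = undefined" by (rule PiE_arb[OF x False])
      then show ?thesis using False by simp
    qed
  qed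
  then have cx: "x = comm (product_group I F) z w" by (simp add: e)
  show "x \<in> {comm (product_group I F) z w | z. z \<in> carrier (product_group I F)}"
    by (rule CollectI, rule exI[of _ z], rule conjI[OF cx zc])
qed

lemma nth_prime_props: "n > 2 \<Longrightarrow> Factorial_Ring.prime (nth_prime n) \<and> nth_prime n > 2"
proof -
  assume n: "n > 2"
  let ?S = "{p::nat. Factorial_Ring.prime p}"
  have inf: "infinite ?S" using primes_infinite by simp
  have e: "nth_prime n = enumerate ?S (n - 1)" by (simp only: nth_prime_def)
  have "enumerate ?S (n - 1) \<in> ?S" by (rule enumerate_in_set[OF inf])
  then have pr: "Factorial_Ring.prime (enumerate ?S (n - 1))" by (simp only: mem_Collect_eq)
  have "(0::nat) < n - 1" using n by simp
  have m: "enumerate ?S 0 < enumerate ?S (n - 1)" by (rule enumerate_mono[OF \<open>0 < n - 1\<close> inf])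
  have "enumerate ?S 0 \<in> ?S" by (rule enumerate_in_set[OF inf])
  then have "Factorial_Ring.prime (enumerate ?S 0)" by (simp only: mem_Collect_eq)
  then have "enumerate ?S 0 \<ge> 2" by (rule prime_ge_2_nat)
  then show ?thesis using pr m unfolding e by linarith
qed




lemma gpn_I: "n > 2 \<Longrightarrow> gpn (nth_prime n) n"
  using nth_prime_props[of n] by (unfold_locales) auto

theorem mainTheorem14:
  shows "(\<forall>(p::nat) (n::nat). Factorial_Ring.prime p \<and> p > 2 \<and> n > 2 \<longrightarrow>
            group (Gpn p n) \<and> finite (carrier (Gpn p n)) \<and>
            nilpotent_grp (Gpn p n) \<and> nilpotency_class (Gpn p n) \<ge> n - 1 \<and>
            (\<forall>\<phi>\<in>inner_auts (Gpn p n). subgroup (twisted_class_e (Gpn p n) \<phi>) (Gpn p n)))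
       \<and> (let G = product_group {n::nat. n > 2} (\<lambda>n. Gpn (nth_prime n) n) in
            group G \<and> residually_nilpotent G \<and> \<not> nilpotent_grp G \<and>
            (\<forall>\<phi>\<in>inner_auts G. subgroup (twisted_class_e G \<phi>) G))"
proof (rule conjI)
  show "\<forall>(p::nat) (n::nat). Factorial_Ring.prime p \<and> p > 2 \<and> n > 2 \<longrightarrow>
            group (Gpn p n) \<and> finite (carrier (Gpn p n)) \<and>
            nilpotent_grp (Gpn p n) \<and> nilpotency_class (Gpn p n) \<ge> n - 1 \<and>
            (\<forall>\<phi>\<in>inner_auts (Gpn p n). subgroup (twisted_class_e (Gpn p n) \<phi>) (Gpn p n))"
  proof (intro allI impI)
    fix p n :: nat assume h: "Factorial_Ring.prime p \<and> p > 2 \<and> n > 2"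
    then have "gpn p n" by (unfold_locales) auto
    then show "group (Gpn p n) \<and> finite (carrier (Gpn p n)) \<and>
            nilpotent_grp (Gpn p n) \<and> nilpotency_class (Gpn p n) \<ge> n - 1 \<and>
            (\<forall>\<phi>\<in>inner_auts (Gpn p n). subgroup (twisted_class_e (Gpn p n) \<phi>) (Gpn p n))"
      by (rule gpn.factor_main)
  qed
next
  define I where "I = {n::nat. n > 2}"
  define F where "F = (\<lambda>n. Gpn (nth_prime n) n)"
  define PG where "PG = product_group I F"
  have loc: "gpn (nth_prime i) i" if "i \<in> I" for i using gpn_I that unfolding I_def by simp
  have Fg: "group (F i)" if "i \<in> I" for i unfolding F_def using gpn.group_G[OF loc[OF that]] .
  have grPG: "group PG" unfolding PG_def using Fg by simp
  have "residually_nilpotent PG"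
    unfolding residually_nilpotent_def
  proof (rule equalityI)
    show "{\<one>\<^bsub>PG\<^esub>} \<subseteq> (\<Inter>k\<in>{1..}. gamma PG k)"
    proof (rule subsetI)
      fix x assume "x \<in> {\<one>\<^bsub>PG\<^esub>}"
      then have x1: "x = \<one>\<^bsub>PG\<^esub>" by simp
      show "x \<in> (\<Inter>k\<in>{1..}. gamma PG k)"
      proof (rule INT_I)
        fix k show "x \<in> gamma PG k" unfolding x1 by (rule subgroup.one_closed[OF gamma_subgroup[OF grPG]])
      qed
    qed
    show "(\<Inter>k\<in>{1..}. gamma PG k) \<subseteq> {\<one>\<^bsub>PG\<^esub>}"
    proof
      fix x assume x: "x \<in> (\<Inter>k\<in>{1..}. gamma PG k)"
      have "x \<in> gamma PG (Suc 0)" by (rule INT_D[OF x]) simp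
      then have xc: "x \<in> PiE I (\<lambda>i. carrier (F i))" unfolding PG_def by simp
      have xi: "x i = \<one>\<^bsub>F i\<^esub>" if i: "i \<in> I" for i
      proof -
        have "x \<in> gamma PG (Suc i)" by (rule INT_D[OF x]) simp
        moreover have sub: "gamma (product_group I F) (Suc i) \<subseteq> PiE I (\<lambda>j. gamma (F j) (Suc i))"
          by (rule gamma_product) (rule Fg)
        ultimately have "x \<in> PiE I (\<lambda>j. gamma (F j) (Suc i))" unfolding PG_def by (rule rev_subsetD)
        then have "x i \<in> gamma (F i) (Suc i)" by (rule PiE_mem[OF _ i])
        also have "gamma (F i) (Suc i) = {\<one>\<^bsub>F i\<^esub>}" unfolding F_def by (rule gpn.gamma_top[OF loc[OF i]])
        finally show ?thesis by simp
      qed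
      have "x = (\<lambda>i\<in>I. \<one>\<^bsub>F i\<^esub>)"
      proof (rule ext)
        fix i show "x i = (\<lambda>i\<in>I. \<one>\<^bsub>F i\<^esub>) i"
        proof (cases "i \<in> I")
          case True then show ?thesis using xi by simp
        next
          case False
          have "x i = undefined" by (rule PiE_arb[OF xc False])
          then show ?thesis using False by simp
        qed
      qed
      then show "x \<in> {\<one>\<^bsub>PG\<^esub>}" unfolding PG_def by simp
    qed
  qed
  moreover have "\<not> nilpotent_grp PG"
  proof
    assume "nilpotent_grp PG"
    then obtain c where c: "gamma PG (Suc c) = {\<one>\<^bsub>PG\<^esub>}" unfolding nilpotent_grp_def by blast
    define i where "i = c + 3"
    have i: "i \<in> I" unfolding i_def I_def by simp
    interpret L: gpn "nth_prime i" i by (rule loc[OF i])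
    define a where "a = (\<lambda>k. L.elem (int (nth_prime i)^k) 0)"
    define b where "b = L.elem 0 (nth_prime i^(i-1) - 1)"
    have "single I F i (a c) \<in> gamma (product_group I F) (Suc c)"
    proof (rule single_gamma[of I F i a b c, OF Fg i])
      show "a k \<in> carrier (F i)" for k unfolding a_def F_def by (rule L.elem_carrier)
      show "b \<in> carrier (F i)" unfolding b_def F_def by (rule L.elem_carrier)
      show "a (Suc k) = comm (F i) (a k) b" for k unfolding a_def b_def F_def by (rule L.lower_comm)
    qed
    then have "single I F i (a c) \<in> {\<one>\<^bsub>PG\<^esub>}" using c unfolding PG_def by simp
    then have "single I F i (a c) = \<one>\<^bsub>PG\<^esub>" by simp
    then have "single I F i (a c) i = \<one>\<^bsub>PG\<^esub> i" by simp
    then have "a c = \<one>\<^bsub>F i\<^esub>" using i unfolding PG_def single_def by simp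
    moreover have "c < i" unfolding i_def by simp
    ultimately show False using L.lower_ne[of c] unfolding a_def F_def by simp
  qed
  moreover have "\<forall>\<phi>\<in>inner_auts PG. subgroup (twisted_class_e PG \<phi>) PG"
  proof
    fix \<phi> assume "\<phi> \<in> inner_auts PG"
    then obtain g where g: "g \<in> carrier PG" "\<phi> = inner_aut PG g" unfolding inner_auts_def by blast
    have w: "inv\<^bsub>PG\<^esub> g \<in> carrier PG" using group.inv_closed[OF grPG g(1)] .
    have "twisted_class_e PG \<phi> = {comm PG z (inv\<^bsub>PG\<^esub> g) | z. z \<in> carrier PG}"
      unfolding g(2) by (rule twisted_inner[OF grPG g(1)])
    also have "\<dots> = PiE I (\<lambda>i. {comm (F i) z ((inv\<^bsub>PG\<^esub> g) i) | z. z \<in> carrier (F i)})"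
      unfolding PG_def by (rule product_twisted[of I F, OF Fg w[unfolded PG_def]])
    finally have e: "twisted_class_e PG \<phi> = PiE I (\<lambda>i. {comm (F i) z ((inv\<^bsub>PG\<^esub> g) i) | z. z \<in> carrier (F i)})" .
    have "subgroup {comm (F i) z ((inv\<^bsub>PG\<^esub> g) i) | z. z \<in> carrier (F i)} (F i)" if i: "i \<in> I" for i
    proof -
      have "(inv\<^bsub>PG\<^esub> g) i \<in> carrier (F i)" using w i unfolding PG_def by (auto simp: PiE_iff)
      then show ?thesis unfolding F_def by (rule gpn.comm_set_subgroup[OF loc[OF i]])
    qed
    then show "subgroup (twisted_class_e PG \<phi>) PG"
      unfolding e unfolding PG_def using PiE_subgroup_product_group[of I F] Fg by blast
  qed
  ultimately show "let G = product_group {n::nat. n > 2} (\<lambda>n. Gpn (nth_prime n) n) in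
            group G \<and> residually_nilpotent G \<and> \<not> nilpotent_grp G \<and>
            (\<forall>\<phi>\<in>inner_auts G. subgroup (twisted_class_e G \<phi>) G)"
    using grPG unfolding Let_def PG_def I_def F_def by blast
qed

end
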